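(* Let $\alpha$ be a Young tableau with $k$ boxes and $r$ rows and $x_1,\dots,x_r\in\mathcal{H}$. Then $\pi^\alpha(x_{\alpha(1)}\otimes\cdots\otimes x_{\alpha(k)})\neq0$ if and only if $x_1\wedge\cdots\wedge x_r\ne0$ (i.e. $x_1,\dots,x_r$ are linearly independent), and in that case the projective class of $\pi^\alpha(x_{\alpha(1)}\otimes\cdots\otimes x_{\alpha(k)})$ depends only on the projective classes of $x_1,\dots,x_r$.
   Context: $\mathcal{H}$ is a finite-dimensional complex Hilbert space. Young tableau $\alpha$: a partition $k=\lambda_1+\cdots+\lambda_r$, $\lambda_1\ge\cdots\ge\lambda_r\ge1$, drawn as left-aligned rows of $\lambda_i$ boxes, boxes numbered bijectively by $1,\dots,k$; $\alpha(i)$ is the row index of the box numbered $i$. $S_k$ acts on $\mathcal{H}^{\otimes k}$ by permuting factors, $\sigma(y_1\otimes\cdots\otimes y_k)=y_{\sigma(1)}\otimes\cdots\otimes y_{\sigma(k)}$. $P_\alpha$, $Q_\alpha$ are the row- and column-preserving subgroups; $c_\alpha=\big(\sum_{\tau\in Q_\alpha}(-1)^\tau\tau\big)\circ\big(\sum_{\sigma\in P_\alpha}\sigma\big)$, and $\pi^\alpha=c_\alpha/\mu(\alpha)$ with $\mu(\alpha)\neq0$ the rational number such that $c_\alpha^2=\mu(\alpha)c_\alpha$. *)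

theory Defs
  imports "HOL-Analysis.Analysis" "HOL-Combinatorics.Permutations"
begin

text \<open>The finite-dimensional complex Hilbert space H is modelled as complex ^ 'n
 ('n a finite index type; the inner product plays no role).  The k-fold tensor power
 is modelled by coordinate functions T :: (nat => 'n) => complex on multi-indices,
 where only the values j 1, ..., j k of a multi-index matter.\<close>

type_synonym 'n tensor = "(nat \<Rightarrow> 'n) \<Rightarrow> complex"

definition ptensor :: "nat \<Rightarrow> (nat \<Rightarrow> complex ^ 'n) \<Rightarrow> 'n tensor" where
  "ptensor k y = (\<lambda>j. \<Prod>i\<in>{1..k}. y i $ j i)"

text \<open>Action of a permutation sigma of {1..k}:
 sigma(y 1 (x)...(x) y k) = y (sigma 1) (x) ... (x) y (sigma k), extended linearly.\<close>
definition perm_act :: "(nat \<Rightarrow> nat) \<Rightarrow> 'n tensor \<Rightarrow> 'n tensor" where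
  "perm_act \<sigma> T = (\<lambda>j. T (j \<circ> inv \<sigma>))"

definition young_boxes :: "nat \<Rightarrow> (nat \<Rightarrow> nat) \<Rightarrow> (nat \<times> nat) set" where
  "young_boxes r lam = {(i, j). 1 \<le> i \<and> i \<le> r \<and> 1 \<le> j \<and> j \<le> lam i}"

definition young_tableau :: "nat \<Rightarrow> nat \<Rightarrow> (nat \<Rightarrow> nat) \<Rightarrow> (nat \<Rightarrow> nat \<times> nat) \<Rightarrow> bool" where
  "young_tableau k r lam num \<longleftrightarrow>
     (\<forall>i\<in>{1..r}. lam i \<ge> 1) \<and> (\<forall>i j. 1 \<le> i \<longrightarrow> i \<le> j \<longrightarrow> j \<le> r \<longrightarrow> lam j \<le> lam i) \<and>
     k = (\<Sum>i=1..r. lam i) \<and> bij_betw num {1..k} (young_boxes r lam)"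

text \<open>alpha(i): the row index of the box numbered i; similarly the column index.\<close>
definition tab_row :: "(nat \<Rightarrow> nat \<times> nat) \<Rightarrow> nat \<Rightarrow> nat" where
  "tab_row num i = fst (num i)"
definition tab_col :: "(nat \<Rightarrow> nat \<times> nat) \<Rightarrow> nat \<Rightarrow> nat" where
  "tab_col num i = snd (num i)"

definition row_group :: "nat \<Rightarrow> (nat \<Rightarrow> nat \<times> nat) \<Rightarrow> (nat \<Rightarrow> nat) set" where
  "row_group k num = {\<sigma>. \<sigma> permutes {1..k} \<and> (\<forall>i\<in>{1..k}. tab_row num (\<sigma> i) = tab_row num i)}"
definition col_group :: "nat \<Rightarrow> (nat \<Rightarrow> nat \<times> nat) \<Rightarrow> (nat \<Rightarrow> nat) set" where
  "col_group k num = {\<sigma>. \<sigma> permutes {1..k} \<and> (\<forall>i\<in>{1..k}. tab_col num (\<sigma> i) = tab_col num i)}"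

text \<open>Group algebra Q[S_k]: functions on permutations of {1..k}; product = convolution
 w.r.t. composition of permutations.\<close>
definition ga_mult :: "nat \<Rightarrow> ((nat \<Rightarrow> nat) \<Rightarrow> rat) \<Rightarrow> ((nat \<Rightarrow> nat) \<Rightarrow> rat) \<Rightarrow> ((nat \<Rightarrow> nat) \<Rightarrow> rat)" where
  "ga_mult k f g = (\<lambda>x. \<Sum>a\<in>{p. p permutes {1..k}}. \<Sum>b\<in>{p. p permutes {1..k}}.
                        if a \<circ> b = x then f a * g b else 0)"

definition young_sym_ga :: "nat \<Rightarrow> (nat \<Rightarrow> nat \<times> nat) \<Rightarrow> ((nat \<Rightarrow> nat) \<Rightarrow> rat)" where
  "young_sym_ga k num = (\<lambda>x. \<Sum>\<tau>\<in>col_group k num. \<Sum>\<sigma>\<in>row_group k num.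
                              if \<tau> \<circ> \<sigma> = x then of_int (sign \<tau>) else 0)"

definition young_mu :: "nat \<Rightarrow> (nat \<Rightarrow> nat \<times> nat) \<Rightarrow> rat" where
  "young_mu k num = (THE \<mu>. \<mu> \<noteq> 0 \<and>
      ga_mult k (young_sym_ga k num) (young_sym_ga k num) = (\<lambda>x. \<mu> * young_sym_ga k num x))"

definition young_sym :: "nat \<Rightarrow> (nat \<Rightarrow> nat \<times> nat) \<Rightarrow> 'n tensor \<Rightarrow> 'n tensor" where
  "young_sym k num T = (\<lambda>j. \<Sum>\<tau>\<in>col_group k num. of_int (sign \<tau>) *
       perm_act \<tau> (\<lambda>j'. \<Sum>\<sigma>\<in>row_group k num. perm_act \<sigma> T j') j)"

definition young_proj :: "nat \<Rightarrow> (nat \<Rightarrow> nat \<times> nat) \<Rightarrow> 'n tensor \<Rightarrow> 'n tensor" where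
  "young_proj k num T = (\<lambda>j. young_sym k num T j / of_rat (young_mu k num))"

end

theory Submission
  imports Defs
begin


definition pgrp :: "nat \<Rightarrow> (nat \<Rightarrow> 'b) \<Rightarrow> (nat \<Rightarrow> nat) set" where
  "pgrp k f = {\<sigma>. \<sigma> permutes {1..k} \<and> (\<forall>i\<in>{1..k}. f (\<sigma> i) = f i)}"

lemma row_group_pgrp: "row_group k num = pgrp k (tab_row num)"
  by (simp add: row_group_def pgrp_def)
lemma col_group_pgrp: "col_group k num = pgrp k (tab_col num)"
  by (simp add: col_group_def pgrp_def)

lemma pgrp_permutes: "\<sigma> \<in> pgrp k f \<Longrightarrow> \<sigma> permutes {1..k}"
  by (simp add: pgrp_def)
lemma pgrp_id: "id \<in> pgrp k f"
  by (simp add: pgrp_def permutes_id)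
lemma pgrpI: "\<sigma> permutes {1..k} \<Longrightarrow> (\<And>i. i \<in> {1..k} \<Longrightarrow> f (\<sigma> i) = f i) \<Longrightarrow> \<sigma> \<in> pgrp k f"
  unfolding pgrp_def by blast
lemma pgrpD: "\<sigma> \<in> pgrp k f \<Longrightarrow> i \<in> {1..k} \<Longrightarrow> f (\<sigma> i) = f i"
  unfolding pgrp_def by blast
lemma pgrp_in: "\<sigma> \<in> pgrp k f \<Longrightarrow> i \<in> {1..k} \<Longrightarrow> \<sigma> i \<in> {1..k}"
  by (simp only: permutes_in_image[OF pgrp_permutes])
lemma pgrp_comp: "\<sigma> \<in> pgrp k f \<Longrightarrow> \<tau> \<in> pgrp k f \<Longrightarrow> \<sigma> \<circ> \<tau> \<in> pgrp k f"
proof (rule pgrpI)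
  assume s: "\<sigma> \<in> pgrp k f" and t: "\<tau> \<in> pgrp k f"
  show "\<sigma> \<circ> \<tau> permutes {1..k}" by (rule permutes_compose[OF pgrp_permutes[OF t] pgrp_permutes[OF s]])
  fix i assume i: "i \<in> {1..k}"
  have "f (\<sigma> (\<tau> i)) = f (\<tau> i)" by (rule pgrpD[OF s pgrp_in[OF t i]])
  also have "\<dots> = f i" by (rule pgrpD[OF t i])
  finally show "f ((\<sigma> \<circ> \<tau>) i) = f i" by simp
qed
lemma pgrp_inv: "\<sigma> \<in> pgrp k f \<Longrightarrow> inv \<sigma> \<in> pgrp k f"
proof -
  assume a: "\<sigma> \<in> pgrp k f"
  then have p: "\<sigma> permutes {1..k}" by (rule pgrp_permutes)
  have "f (inv \<sigma> i) = f i" if "i \<in> {1..k}" for i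
  proof -
    have "inv \<sigma> i \<in> {1..k}" using that by (simp only: permutes_in_image[OF permutes_inv[OF p]])
    then have "f (\<sigma> (inv \<sigma> i)) = f (inv \<sigma> i)" by (rule pgrpD[OF a])
    then show ?thesis using p by (simp add: permutes_inverses(1))
  qed
  moreover have "inv \<sigma> permutes {1..k}" using p by (rule permutes_inv)
  ultimately show ?thesis unfolding pgrp_def by blast
qed
lemma finite_pgrp: "finite (pgrp k f)"
proof (rule finite_subset[OF _ finite_permutations[of "{1..k}"]])
  show "pgrp k f \<subseteq> {p. p permutes {1..k}}" unfolding pgrp_def by blast
qed simp
lemma pgrp_permutation: "\<sigma> \<in> pgrp k f \<Longrightarrow> permutation \<sigma>"
  by (rule permutes_imp_permutation[OF _ pgrp_permutes]) simp_all
lemma pgrp_out: "\<sigma> \<in> pgrp k f \<Longrightarrow> i \<notin> {1..k} \<Longrightarrow> \<sigma> i = i"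
  by (rule permutes_not_in[OF pgrp_permutes])
lemma pgrp_bij: "\<sigma> \<in> pgrp k f \<Longrightarrow> bij_betw (\<lambda>\<tau>. \<sigma> \<circ> \<tau>) (pgrp k f) (pgrp k f)"
proof -
  assume s: "\<sigma> \<in> pgrp k f"
  have p: "\<sigma> permutes {1..k}" using s pgrp_permutes by blast
  show ?thesis
  proof (rule bij_betw_byWitness[where f'="\<lambda>\<tau>. inv \<sigma> \<circ> \<tau>"])
    show "\<forall>a\<in>pgrp k f. inv \<sigma> \<circ> (\<sigma> \<circ> a) = a"
      using p by (simp add: o_assoc permutes_inv_o(2))
    show "\<forall>a\<in>pgrp k f. \<sigma> \<circ> (inv \<sigma> \<circ> a) = a"
      using p by (simp add: o_assoc permutes_inv_o(1))
  qed (use s in \<open>auto simp: pgrp_comp pgrp_inv\<close>)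
qed
lemma pgrp_bij_right: "\<sigma> \<in> pgrp k f \<Longrightarrow> bij_betw (\<lambda>\<tau>. \<tau> \<circ> \<sigma>) (pgrp k f) (pgrp k f)"
proof -
  assume s: "\<sigma> \<in> pgrp k f"
  have p: "\<sigma> permutes {1..k}" using s pgrp_permutes by blast
  show ?thesis
  proof (rule bij_betw_byWitness[where f'="\<lambda>\<tau>. \<tau> \<circ> inv \<sigma>"])
    show "\<forall>a\<in>pgrp k f. a \<circ> \<sigma> \<circ> inv \<sigma> = a"
      using p by (simp add: o_assoc[symmetric] permutes_inv_o(1))
    show "\<forall>a\<in>pgrp k f. a \<circ> inv \<sigma> \<circ> \<sigma> = a"
      using p by (simp add: o_assoc[symmetric] permutes_inv_o(2))
  qed (use s in \<open>auto simp: pgrp_comp pgrp_inv\<close>)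
qed
lemma pgrp_bij_inv: "bij_betw inv (pgrp k f) (pgrp k f)"
  by (rule bij_betw_byWitness[where f'=inv]) (auto simp: pgrp_inv inv_inv_eq[OF permutes_bij[OF pgrp_permutes]])

definition Sk :: "nat \<Rightarrow> (nat \<Rightarrow> nat) set" where "Sk k = pgrp k (\<lambda>_::nat. ())"

lemma Sk_iff: "x \<in> Sk k \<longleftrightarrow> x permutes {1..k}"
  by (simp add: Sk_def pgrp_def)
lemma Sk_alt: "{p. p permutes {1..k}} = Sk k"
  using Sk_iff by blast
lemma Sk_comp: "a \<in> Sk k \<Longrightarrow> b \<in> Sk k \<Longrightarrow> a \<circ> b \<in> Sk k"
  unfolding Sk_def by (rule pgrp_comp)
lemma Sk_inv: "a \<in> Sk k \<Longrightarrow> inv a \<in> Sk k"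
  unfolding Sk_def by (rule pgrp_inv)
lemma Sk_id: "id \<in> Sk k"
  unfolding Sk_def by (rule pgrp_id)
lemma finite_Sk: "finite (Sk k)"
  unfolding Sk_def by (rule finite_pgrp)
lemma Sk_bij: "a \<in> Sk k \<Longrightarrow> bij a"
  unfolding Sk_iff by (rule permutes_bij)
lemma Sk_inv_l: "a \<in> Sk k \<Longrightarrow> inv a \<circ> a = id"
  unfolding Sk_iff by (rule permutes_inv_o(2))
lemma Sk_inv_r: "a \<in> Sk k \<Longrightarrow> a \<circ> inv a = id"
  unfolding Sk_iff by (rule permutes_inv_o(1))
lemma Sk_inv_inv: "a \<in> Sk k \<Longrightarrow> inv (inv a) = a"
  by (rule inv_inv_eq[OF Sk_bij])
lemma Sk_inv_comp: "a \<in> Sk k \<Longrightarrow> b \<in> Sk k \<Longrightarrow> inv (a \<circ> b) = inv b \<circ> inv a"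
  by (rule o_inv_distrib[OF Sk_bij Sk_bij])
lemma Sk_bij_left: "a \<in> Sk k \<Longrightarrow> bij_betw (\<lambda>b. a \<circ> b) (Sk k) (Sk k)"
  unfolding Sk_def by (rule pgrp_bij)

lemma Sk_cancel_left: "a \<in> Sk k \<Longrightarrow> (a \<circ> f = a \<circ> g) = (f = g)"
proof
  assume a: "a \<in> Sk k" and e: "a \<circ> f = a \<circ> g"
  have "inv a \<circ> (a \<circ> f) = inv a \<circ> (a \<circ> g)" using e by simp
  then show "f = g" by (simp add: o_assoc Sk_inv_l[OF a])
qed simp
lemma Sk_cancel_right: "a \<in> Sk k \<Longrightarrow> (f \<circ> a = g \<circ> a) = (f = g)"
proof
  assume a: "a \<in> Sk k" and e: "f \<circ> a = g \<circ> a"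
  have "(f \<circ> a) \<circ> inv a = (g \<circ> a) \<circ> inv a" using e by simp
  then show "f = g" by (simp add: o_assoc[symmetric] Sk_inv_r[OF a])
qed simp
lemma pgrp_Sk: "p \<in> pgrp k f \<Longrightarrow> p \<in> Sk k"
  unfolding Sk_iff by (rule pgrp_permutes)

lemma sum_inv_reindex: "sum F (pgrp k f) = sum (\<lambda>a. F (inv a)) (pgrp k f)"
  by (rule sum.reindex_bij_betw[OF pgrp_bij_inv, symmetric])

lemma ga_mult_def2: "ga_mult k f g x = (\<Sum>a\<in>Sk k. \<Sum>b\<in>Sk k. if a \<circ> b = x then f a * g b else 0)"
  unfolding ga_mult_def Sk_alt by (rule refl)

lemma ga_mult_out: "x \<notin> Sk k \<Longrightarrow> ga_mult k f g x = 0"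
  unfolding ga_mult_def2 by (rule sum.neutral, rule ballI, rule sum.neutral) (auto dest: Sk_comp)

lemma ga_mult_eq: assumes x: "x \<in> Sk k"
  shows "ga_mult k f g x = (\<Sum>a\<in>Sk k. f a * g (inv a \<circ> x))"
  unfolding ga_mult_def2
proof (rule sum.cong[OF refl])
  fix a assume a: "a \<in> Sk k"
  have eq: "(a \<circ> b = x) = (b = inv a \<circ> x)" for b
  proof
    assume "a \<circ> b = x"
    then have "inv a \<circ> (a \<circ> b) = inv a \<circ> x" by simp
    then show "b = inv a \<circ> x" by (simp add: o_assoc Sk_inv_l[OF a])
  next
    assume "b = inv a \<circ> x"
    then show "a \<circ> b = x" by (simp add: o_assoc Sk_inv_r[OF a])
  qed
  have "(\<Sum>b\<in>Sk k. if a \<circ> b = x then f a * g b else 0) = (\<Sum>b\<in>Sk k. if b = inv a \<circ> x then f a * g b else 0)"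
    by (simp only: eq)
  also have "\<dots> = f a * g (inv a \<circ> x)"
    using Sk_comp[OF Sk_inv[OF a] x] by (simp add: finite_Sk)
  finally show "(\<Sum>b\<in>Sk k. if a \<circ> b = x then f a * g b else 0) = f a * g (inv a \<circ> x)" .
qed

lemma ga_mult_eq2: assumes x: "x \<in> Sk k"
  shows "ga_mult k f g x = (\<Sum>b\<in>Sk k. f (x \<circ> inv b) * g b)"
  unfolding ga_mult_def2
  apply (subst sum.swap)
proof (rule sum.cong[OF refl])
  fix b assume b: "b \<in> Sk k"
  have eq: "(a \<circ> b = x) = (a = x \<circ> inv b)" for a
  proof
    assume "a \<circ> b = x"
    then have "(a \<circ> b) \<circ> inv b = x \<circ> inv b" by simp
    then show "a = x \<circ> inv b" by (simp add: o_assoc[symmetric] Sk_inv_r[OF b])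
  next
    assume "a = x \<circ> inv b"
    then show "a \<circ> b = x" by (simp add: o_assoc[symmetric] Sk_inv_l[OF b])
  qed
  have "(\<Sum>a\<in>Sk k. if a \<circ> b = x then f a * g b else 0) = (\<Sum>a\<in>Sk k. if a = x \<circ> inv b then f a * g b else 0)"
    by (simp only: eq)
  also have "\<dots> = f (x \<circ> inv b) * g b"
    using Sk_comp[OF x Sk_inv[OF b]] by (simp add: finite_Sk)
  finally show "(\<Sum>a\<in>Sk k. if a \<circ> b = x then f a * g b else 0) = f (x \<circ> inv b) * g b" .
qed

lemma ga_mult_left_shift:
  assumes q: "q \<in> Sk k" and y: "y \<in> Sk k"
  shows "ga_mult k f g (q \<circ> y) = (\<Sum>a\<in>Sk k. f (q \<circ> a) * g (inv a \<circ> y))"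
proof -
  have "ga_mult k f g (q \<circ> y) = (\<Sum>a\<in>Sk k. f a * g (inv a \<circ> (q \<circ> y)))"
    by (rule ga_mult_eq[OF Sk_comp[OF q y]])
  also have "\<dots> = (\<Sum>a\<in>Sk k. f (q \<circ> a) * g (inv (q \<circ> a) \<circ> (q \<circ> y)))"
    by (rule sum.reindex_bij_betw[OF Sk_bij_left[OF q], symmetric])
  also have "\<dots> = (\<Sum>a\<in>Sk k. f (q \<circ> a) * g (inv a \<circ> y))"
  proof (rule sum.cong[OF refl])
    fix a assume a: "a \<in> Sk k"
    have "inv (q \<circ> a) \<circ> (q \<circ> y) = inv a \<circ> y"
      by (simp add: Sk_inv_comp[OF q a] o_assoc) (simp add: o_assoc[symmetric] Sk_inv_l[OF q])
    then show "f (q \<circ> a) * g (inv (q \<circ> a) \<circ> (q \<circ> y)) = f (q \<circ> a) * g (inv a \<circ> y)" by simp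
  qed
  finally show ?thesis .
qed

lemma ga_mult_scale_left: "ga_mult k (\<lambda>y. s * f y) g = (\<lambda>x. s * ga_mult k f g x)"
  unfolding ga_mult_def by (auto simp: sum_distrib_left mult.assoc intro!: sum.cong)
lemma ga_mult_scale_right: "ga_mult k f (\<lambda>y. s * g y) = (\<lambda>x. s * ga_mult k f g x)"
  unfolding ga_mult_def by (auto simp: sum_distrib_left mult.left_commute intro!: sum.cong)

lemma ga_assoc: "ga_mult k (ga_mult k f g) h = ga_mult k f (ga_mult k g h)"
proof
  fix x
  show "ga_mult k (ga_mult k f g) h x = ga_mult k f (ga_mult k g h) x"
  proof (cases "x \<in> Sk k")
    case False
    then show ?thesis by (simp add: ga_mult_out)
  next
    case x: True
    have "ga_mult k (ga_mult k f g) h x = (\<Sum>a\<in>Sk k. (\<Sum>a'\<in>Sk k. f a' * g (inv a' \<circ> a)) * h (inv a \<circ> x))"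
      using x by (simp add: ga_mult_eq)
    also have "\<dots> = (\<Sum>a\<in>Sk k. \<Sum>a'\<in>Sk k. f a' * g (inv a' \<circ> a) * h (inv a \<circ> x))"
      by (simp add: sum_distrib_right)
    also have "\<dots> = (\<Sum>a'\<in>Sk k. \<Sum>a\<in>Sk k. f a' * g (inv a' \<circ> a) * h (inv a \<circ> x))"
      by (rule sum.swap)
    also have "\<dots> = (\<Sum>a'\<in>Sk k. f a' * (\<Sum>b\<in>Sk k. g b * h (inv b \<circ> (inv a' \<circ> x))))"
    proof (rule sum.cong[OF refl])
      fix a' assume a': "a' \<in> Sk k"
      have "(\<Sum>a\<in>Sk k. f a' * g (inv a' \<circ> a) * h (inv a \<circ> x))
          = (\<Sum>b\<in>Sk k. f a' * g (inv a' \<circ> (a' \<circ> b)) * h (inv (a' \<circ> b) \<circ> x))"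
        by (rule sum.reindex_bij_betw[OF Sk_bij_left[OF a'], symmetric])
      also have "\<dots> = (\<Sum>b\<in>Sk k. f a' * (g b * h (inv b \<circ> (inv a' \<circ> x))))"
      proof (rule sum.cong[OF refl])
        fix b assume b: "b \<in> Sk k"
        have "inv a' \<circ> (a' \<circ> b) = b" by (simp add: o_assoc Sk_inv_l[OF a'])
        moreover have "inv (a' \<circ> b) \<circ> x = inv b \<circ> (inv a' \<circ> x)"
          by (simp add: Sk_inv_comp[OF a' b] o_assoc)
        ultimately show "f a' * g (inv a' \<circ> (a' \<circ> b)) * h (inv (a' \<circ> b) \<circ> x) = f a' * (g b * h (inv b \<circ> (inv a' \<circ> x)))"
          by simp
      qed
      finally show "(\<Sum>a\<in>Sk k. f a' * g (inv a' \<circ> a) * h (inv a \<circ> x)) = f a' * (\<Sum>b\<in>Sk k. g b * h (inv b \<circ> (inv a' \<circ> x)))"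
        by (simp add: sum_distrib_left)
    qed
    also have "\<dots> = ga_mult k f (ga_mult k g h) x"
      using x by (simp add: ga_mult_eq Sk_comp Sk_inv)
    finally show ?thesis .
  qed
qed

lemma card_fibers:
  assumes A: "finite A"
  shows "card {i\<in>A. \<Phi> i} = (\<Sum>j\<in>g`A. card {i\<in>A. g i = j \<and> \<Phi> i})"
proof -
  have e: "{i\<in>A. \<Phi> i} = \<Union>((\<lambda>j. {i\<in>A. g i = j \<and> \<Phi> i}) ` (g`A))" by auto
  show ?thesis unfolding e
    by (rule card_UN_disjoint) (use A in auto)
qed

locale tab =
  fixes k r :: nat and lam :: "nat \<Rightarrow> nat" and num :: "nat \<Rightarrow> nat \<times> nat"
  assumes yt: "young_tableau k r lam num"
begin

abbreviation "trow \<equiv> tab_row num"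
abbreviation "tcol \<equiv> tab_col num"
abbreviation "PG \<equiv> pgrp k trow"
abbreviation "QG \<equiv> pgrp k tcol"
abbreviation "BX \<equiv> young_boxes r lam"

lemma bij: "bij_betw num {1..k} BX"
  using yt unfolding young_tableau_def by blast
lemma lam_pos: "s \<in> {1..r} \<Longrightarrow> lam s \<ge> 1"
  using yt by (simp add: young_tableau_def)
lemma lam_mono: "1 \<le> s \<Longrightarrow> s \<le> t \<Longrightarrow> t \<le> r \<Longrightarrow> lam t \<le> lam s"
  using yt by (simp add: young_tableau_def)
lemma k_sum: "k = (\<Sum>i=1..r. lam i)"
  using yt by (simp add: young_tableau_def)

lemma num_pair: "num i = (trow i, tcol i)"
  by (simp add: tab_row_def tab_col_def)
lemma num_in: "i \<in> {1..k} \<Longrightarrow> num i \<in> BX"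
  by (rule bij_betw_apply[OF bij])
lemma row_range: "i \<in> {1..k} \<Longrightarrow> trow i \<in> {1..r}"
  using num_in[of i] by (simp add: young_boxes_def tab_row_def case_prod_beta)
lemma col_ge1: "i \<in> {1..k} \<Longrightarrow> 1 \<le> tcol i"
  using num_in[of i] by (simp add: young_boxes_def tab_col_def case_prod_beta)
lemma col_le: "i \<in> {1..k} \<Longrightarrow> tcol i \<le> lam (trow i)"
  using num_in[of i] by (simp add: young_boxes_def tab_col_def tab_row_def case_prod_beta)
lemma num_inj: "i \<in> {1..k} \<Longrightarrow> i' \<in> {1..k} \<Longrightarrow> trow i = trow i' \<Longrightarrow> tcol i = tcol i' \<Longrightarrow> i = i'"
proof -
  assume a: "i \<in> {1..k}" "i' \<in> {1..k}" "trow i = trow i'" "tcol i = tcol i'"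
  have "num i = num i'" using a(3,4) by (simp add: num_pair)
  then show ?thesis using inj_onD[OF bij_betw_imp_inj_on[OF bij] _ a(1,2)] by simp
qed
lemma box_surj: "b \<in> BX \<Longrightarrow> \<exists>i\<in>{1..k}. num i = b"
proof -
  assume "b \<in> BX"
  then have "b \<in> num ` {1..k}" using bij_betw_imp_surj_on[OF bij] by simp
  then show ?thesis by (rule imageE) (rule bexI, rule sym)
qed
lemma box_surj2: "1 \<le> s \<Longrightarrow> s \<le> r \<Longrightarrow> 1 \<le> j \<Longrightarrow> j \<le> lam s \<Longrightarrow>
    \<exists>i\<in>{1..k}. trow i = s \<and> tcol i = j"
proof -
  assume "1 \<le> s" "s \<le> r" "1 \<le> j" "j \<le> lam s"
  then have "(s,j) \<in> BX" by (simp add: young_boxes_def)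
  then obtain i where "i \<in> {1..k}" "num i = (s,j)" using box_surj by blast
  then show ?thesis by (intro bexI[of _ i]) (simp_all add: tab_row_def tab_col_def)
qed

lemma PQ: "\<sigma> \<in> PG \<Longrightarrow> \<sigma> \<in> QG \<Longrightarrow> \<sigma> = id"
proof
  fix i assume p: "\<sigma> \<in> PG" and q: "\<sigma> \<in> QG"
  show "\<sigma> i = id i"
  proof (cases "i \<in> {1..k}")
    case True
    show ?thesis using num_inj[OF pgrp_in[OF p True] True pgrpD[OF p True] pgrpD[OF q True]] by simp
  next
    case False
    then show ?thesis using pgrp_out[OF p False] by simp
  qed
qed

abbreviation "cc \<equiv> young_sym_ga k num"

lemma cc_def2: "cc x = (\<Sum>\<tau>\<in>QG. \<Sum>\<sigma>\<in>PG. if \<tau> \<circ> \<sigma> = x then of_int (sign \<tau>) else 0)"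
  unfolding young_sym_ga_def row_group_pgrp col_group_pgrp by (rule refl)

lemma cc_out: "x \<notin> Sk k \<Longrightarrow> cc x = 0"
  unfolding cc_def2 by (rule sum.neutral, rule ballI, rule sum.neutral) (auto dest: Sk_comp pgrp_Sk)

lemma cc_left: assumes q: "q \<in> QG" shows "cc (q \<circ> x) = of_int (sign q) * cc x"
proof -
  have "cc (q \<circ> x) = (\<Sum>\<tau>\<in>QG. \<Sum>\<sigma>\<in>PG. if (q \<circ> \<tau>) \<circ> \<sigma> = q \<circ> x then of_int (sign (q \<circ> \<tau>)) else 0)"
    unfolding cc_def2 by (rule sum.reindex_bij_betw[OF pgrp_bij[OF q], symmetric])
  also have "\<dots> = (\<Sum>\<tau>\<in>QG. \<Sum>\<sigma>\<in>PG. of_int (sign q) * (if \<tau> \<circ> \<sigma> = x then of_int (sign \<tau>) else 0))"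
  proof (intro sum.cong refl)
    fix \<tau> \<sigma> assume t: "\<tau> \<in> QG" and s: "\<sigma> \<in> PG"
    have "((q \<circ> \<tau>) \<circ> \<sigma> = q \<circ> x) = (\<tau> \<circ> \<sigma> = x)"
      by (simp only: o_assoc[symmetric] Sk_cancel_left[OF pgrp_Sk[OF q]])
    moreover have "sign (q \<circ> \<tau>) = sign q * sign \<tau>"
      by (rule sign_compose[OF pgrp_permutation[OF q] pgrp_permutation[OF t]])
    ultimately show "(if (q \<circ> \<tau>) \<circ> \<sigma> = q \<circ> x then of_int (sign (q \<circ> \<tau>)) else 0) = of_int (sign q) * (if \<tau> \<circ> \<sigma> = x then of_int (sign \<tau>) else (0::rat))"
      by simp
  qed
  also have "\<dots> = of_int (sign q) * cc x"
    unfolding cc_def2 by (simp add: sum_distrib_left)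
  finally show ?thesis .
qed

lemma cc_right: assumes p: "p \<in> PG" shows "cc (x \<circ> p) = cc x"
proof -
  have "cc (x \<circ> p) = (\<Sum>\<tau>\<in>QG. \<Sum>\<sigma>\<in>PG. if \<tau> \<circ> (\<sigma> \<circ> p) = x \<circ> p then of_int (sign \<tau>) else 0)"
    unfolding cc_def2 by (intro sum.cong refl sum.reindex_bij_betw[OF pgrp_bij_right[OF p], symmetric])
  also have "\<dots> = cc x"
    unfolding cc_def2 by (simp only: o_assoc Sk_cancel_right[OF pgrp_Sk[OF p]])
  finally show ?thesis .
qed

lemma cc_id: "cc id = 1"
proof -
  have "cc id = (\<Sum>\<tau>\<in>QG. if \<tau> = id then 1 else 0)"
    unfolding cc_def2
  proof (rule sum.cong[OF refl])
    fix \<tau> assume t: "\<tau> \<in> QG"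
    show "(\<Sum>\<sigma>\<in>PG. if \<tau> \<circ> \<sigma> = id then of_int (sign \<tau>) else 0) = (if \<tau> = id then 1 else (0::rat))"
    proof (cases "\<tau> = id")
      case True
      then show ?thesis using pgrp_id[of k trow] by (simp add: finite_pgrp)
    next
      case False
      have "\<tau> \<circ> \<sigma> \<noteq> id" if s: "\<sigma> \<in> PG" for \<sigma>
      proof
        assume e: "\<tau> \<circ> \<sigma> = id"
        have "\<tau> = (\<tau> \<circ> \<sigma>) \<circ> inv \<sigma>" by (simp add: o_assoc[symmetric] Sk_inv_r[OF pgrp_Sk[OF s]])
        then have "\<tau> = inv \<sigma>" using e by simp
        then have "\<tau> \<in> PG" using pgrp_inv[OF s] by simp
        then show False using PQ t False by blast
      qed
      then show ?thesis using False by (simp add: sum.neutral)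
    qed
  qed
  also have "\<dots> = 1" using pgrp_id[of k tcol] by (simp add: finite_pgrp)
  finally show ?thesis .
qed

lemma comb_colbound:
  assumes x: "x \<in> Sk k"
    and H: "\<And>i j. i \<in> {1..k} \<Longrightarrow> j \<in> {1..k} \<Longrightarrow> i \<noteq> j \<Longrightarrow> tcol i = tcol j \<Longrightarrow> trow (inv x i) \<noteq> trow (inv x j)"
    and i0: "i0 \<in> {1..k}"
  shows "tcol i0 \<le> lam (trow (inv x i0))"
proof (rule ccontr)
  define h where "h = inv x"
  define \<rho> where "\<rho> i = trow (h i)" for i
  have h: "h \<in> Sk k" unfolding h_def by (rule Sk_inv[OF x])
  have hin: "h i \<in> {1..k}" if "i \<in> {1..k}" for i
    using that h unfolding Sk_iff by (simp only: permutes_in_image)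
  have \<rho>r: "\<rho> i \<in> {1..r}" if "i \<in> {1..k}" for i
    unfolding \<rho>_def by (rule row_range[OF hin[OF that]])
  have Hr: "\<rho> i \<noteq> \<rho> j" if "i \<in> {1..k}" "j \<in> {1..k}" "i \<noteq> j" "tcol i = tcol j" for i j
    unfolding \<rho>_def h_def using H that by blast
  define L where "L j s = {i\<in>{1..k}. tcol i = j \<and> \<rho> i \<le> s}" for j s
  define R where "R j s = {i\<in>{1..k}. tcol i = j \<and> trow i \<le> s}" for j s
  have finL: "finite (L j s)" for j s unfolding L_def by simp
  have finR: "finite (R j s)" for j s unfolding R_def by simp
  have LR: "card (L j s) \<le> card (R j s)" for j s
  proof (cases "\<forall>i\<in>{1..k}. tcol i = j \<longrightarrow> trow i \<le> s")
    case True
    then have "L j s \<subseteq> R j s" unfolding L_def R_def using \<rho>r by auto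
    then show ?thesis by (rule card_mono[OF finR])
  next
    case False
    then obtain i1 where i1: "i1 \<in> {1..k}" "tcol i1 = j" "s < trow i1" by auto
    have "card (L j s) \<le> card {1..s}"
    proof (rule card_inj_on_le)
      show "inj_on \<rho> (L j s)" unfolding L_def inj_on_def using Hr by blast
      show "\<rho> ` L j s \<subseteq> {1..s}" unfolding L_def using \<rho>r by auto
    qed simp
    also have "card {1..s} \<le> card (trow ` R j s)"
    proof (rule card_mono)
      show "finite (trow ` R j s)" using finR by simp
      show "{1..s} \<subseteq> trow ` R j s"
      proof
        fix t assume t: "t \<in> {1..s}"
        have "trow i1 \<le> r" using row_range[OF i1(1)] by simp
        then have tr: "t \<le> r" using t i1 by simp
        have "j \<le> lam (trow i1)" using col_le[OF i1(1)] i1 by simp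
        also have "\<dots> \<le> lam t" using lam_mono[of t "trow i1"] t i1(3) \<open>trow i1 \<le> r\<close> by simp
        finally have jt: "j \<le> lam t" .
        have "1 \<le> j" using col_ge1[OF i1(1)] i1 by simp
        then obtain i where "i \<in> {1..k}" "trow i = t" "tcol i = j"
          using box_surj2[of t j] t tr jt by auto
        then show "t \<in> trow ` R j s" unfolding R_def using t by force
      qed
    qed
    also have "\<dots> \<le> card (R j s)" by (rule card_image_le[OF finR])
    finally show ?thesis .
  qed
  have cardeq: "card {i\<in>{1..k}. \<rho> i \<le> s} = card {i\<in>{1..k}. trow i \<le> s}" for s
  proof (rule bij_betw_same_card[of h])
    have inj: "inj_on h {1..k}" using Sk_bij[OF h] unfolding bij_def by (metis inj_on_subset subset_UNIV)
    show "bij_betw h {i \<in> {1..k}. \<rho> i \<le> s} {i \<in> {1..k}. trow i \<le> s}"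
      unfolding bij_betw_def
    proof
      show "inj_on h {i \<in> {1..k}. \<rho> i \<le> s}" by (rule inj_on_subset[OF inj]) auto
      show "h ` {i \<in> {1..k}. \<rho> i \<le> s} = {i \<in> {1..k}. trow i \<le> s}"
      proof
        show "h ` {i \<in> {1..k}. \<rho> i \<le> s} \<subseteq> {i \<in> {1..k}. trow i \<le> s}"
          using hin unfolding \<rho>_def by auto
        show "{i \<in> {1..k}. trow i \<le> s} \<subseteq> h ` {i \<in> {1..k}. \<rho> i \<le> s}"
        proof
          fix m assume m: "m \<in> {i \<in> {1..k}. trow i \<le> s}"
          have xm: "x m \<in> {1..k}" using m x unfolding Sk_iff by (simp only: permutes_in_image mem_Collect_eq)
          have hx: "h (x m) = m" unfolding h_def using Sk_inv_l[OF x] by (metis comp_apply id_apply)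
          show "m \<in> h ` {i \<in> {1..k}. \<rho> i \<le> s}"
            using m xm hx unfolding \<rho>_def by (intro image_eqI[of _ _ "x m"]) auto
        qed
      qed
    qed
  qed
  have Leq: "card (L j s) = card (R j s)" if j: "j \<in> tcol ` {1..k}" for j s
  proof (rule sum_mono_inv[where I="tcol ` {1..k}" and f="\<lambda>j. card (L j s)" and g="\<lambda>j. card (R j s)"])
    have "(\<Sum>j\<in>tcol ` {1..k}. card (L j s)) = card {i\<in>{1..k}. \<rho> i \<le> s}"
      unfolding L_def by (rule card_fibers[symmetric]) simp
    also have "\<dots> = card {i\<in>{1..k}. trow i \<le> s}" by (rule cardeq)
    also have "\<dots> = (\<Sum>j\<in>tcol ` {1..k}. card (R j s))"
      unfolding R_def by (rule card_fibers) simp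
    finally show "(\<Sum>j\<in>tcol ` {1..k}. card (L j s)) = (\<Sum>j\<in>tcol ` {1..k}. card (R j s))" .
  qed (use LR j in auto)
  assume bad: "\<not> tcol i0 \<le> lam (trow (inv x i0))"
  define j0 where "j0 = tcol i0"
  define s0 where "s0 = \<rho> i0"
  have s0: "s0 \<in> {1..r}" unfolding s0_def by (rule \<rho>r[OF i0])
  have bad': "lam s0 < j0" using bad unfolding j0_def s0_def \<rho>_def h_def by simp
  have Rall: "R j0 (s0 - 1) = {i\<in>{1..k}. tcol i = j0}"
  proof -
    have "trow i \<le> s0 - 1" if "i \<in> {1..k}" "tcol i = j0" for i
    proof (rule ccontr)
      assume "\<not> trow i \<le> s0 - 1"
      then have "s0 \<le> trow i" using s0 by simp
      then have "lam (trow i) \<le> lam s0" using lam_mono[of s0 "trow i"] s0 row_range[OF that(1)] by simp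
      moreover have "j0 \<le> lam (trow i)" using col_le[OF that(1)] that(2) by simp
      ultimately show False using bad' by simp
    qed
    then show ?thesis unfolding R_def by auto
  qed
  have "card (L j0 (s0 - 1)) = card {i\<in>{1..k}. tcol i = j0}"
  proof -
    have "j0 \<in> tcol ` {1..k}" unfolding j0_def using i0 by (rule imageI)
    then show ?thesis using Leq[of j0 "s0 - 1"] Rall by simp
  qed
  moreover have "L j0 (s0 - 1) \<subseteq> {i\<in>{1..k}. tcol i = j0}" unfolding L_def by auto
  ultimately have "L j0 (s0 - 1) = {i\<in>{1..k}. tcol i = j0}"
    using card_subset_eq[of "{i\<in>{1..k}. tcol i = j0}"] by simp
  then have "i0 \<in> L j0 (s0 - 1)" using i0 unfolding j0_def by simp
  then have "\<rho> i0 \<le> s0 - 1" unfolding L_def by simp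
  moreover have "1 \<le> \<rho> i0" using s0 unfolding s0_def by simp
  ultimately show False using s0_def by linarith
qed

lemma comb:
  assumes x: "x \<in> Sk k"
    and H: "\<And>i j. i \<in> {1..k} \<Longrightarrow> j \<in> {1..k} \<Longrightarrow> i \<noteq> j \<Longrightarrow> tcol i = tcol j \<Longrightarrow> trow (inv x i) \<noteq> trow (inv x j)"
  shows "\<exists>q\<in>QG. \<exists>p\<in>PG. x = q \<circ> p"
proof -
  define \<rho> where "\<rho> i = trow (inv x i)" for i
  have hin: "inv x i \<in> {1..k}" if "i \<in> {1..k}" for i
    using that Sk_inv[OF x] unfolding Sk_iff by (simp only: permutes_in_image)
  have ex1: "\<exists>!i'. i' \<in> {1..k} \<and> trow i' = \<rho> i \<and> tcol i' = tcol i" if i: "i \<in> {1..k}" for i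
  proof -
    have r: "\<rho> i \<in> {1..r}" unfolding \<rho>_def by (rule row_range[OF hin[OF i]])
    have c: "tcol i \<le> lam (\<rho> i)" unfolding \<rho>_def by (rule comb_colbound[OF x H i])
    obtain i' where i': "i' \<in> {1..k}" "trow i' = \<rho> i" "tcol i' = tcol i"
      using box_surj2[of "\<rho> i" "tcol i"] r c col_ge1[OF i] by auto
    show ?thesis
    proof (rule ex1I[of _ i'])
      show "i' \<in> {1..k} \<and> trow i' = \<rho> i \<and> tcol i' = tcol i" using i' by simp
      fix y assume "y \<in> {1..k} \<and> trow y = \<rho> i \<and> tcol y = tcol i"
      then show "y = i'" using num_inj[of y i'] i' by simp
    qed
  qed
  define g where "g i = (if i \<in> {1..k} then (THE i'. i' \<in> {1..k} \<and> trow i' = \<rho> i \<and> tcol i' = tcol i) else i)" for i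
  have gp: "g i \<in> {1..k} \<and> trow (g i) = \<rho> i \<and> tcol (g i) = tcol i" if i: "i \<in> {1..k}" for i
    unfolding g_def using theI'[OF ex1[OF i]] i by simp
  have ginj: "inj_on g {1..k}"
  proof (rule inj_onI)
    fix i j assume i: "i \<in> {1..k}" and j: "j \<in> {1..k}" and e: "g i = g j"
    show "i = j"
    proof (rule ccontr)
      assume "i \<noteq> j"
      moreover have "tcol i = tcol j" using gp[OF i] gp[OF j] e by simp
      moreover have "\<rho> i = \<rho> j" using gp[OF i] gp[OF j] e by simp
      ultimately show False using H[OF i j] unfolding \<rho>_def by simp
    qed
  qed
  have gimg: "g ` {1..k} = {1..k}"
    by (rule endo_inj_surj[OF _ _ ginj]) (use gp in auto)
  have gperm: "g permutes {1..k}"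
  proof (rule bij_imp_permutes)
    show "bij_betw g {1..k} {1..k}" using ginj gimg by (simp add: bij_betw_def)
    fix i assume "i \<notin> {1..k}" then show "g i = i" unfolding g_def by (rule if_not_P)
  qed
  have gQ: "g \<in> QG"
  proof (rule pgrpI[OF gperm])
    fix i assume "i \<in> {1..k}" then show "tcol (g i) = tcol i" using gp by simp
  qed
  have xperm: "x permutes {1..k}" using x by (simp add: Sk_iff)
  have pP: "g \<circ> x \<in> PG"
  proof (rule pgrpI)
    show "g \<circ> x permutes {1..k}" by (rule permutes_compose[OF xperm gperm])
    fix m assume m: "m \<in> {1..k}"
    have xm: "x m \<in> {1..k}" using m xperm by (simp only: permutes_in_image)
    have "inv x (x m) = m" using Sk_inv_l[OF x] by (metis comp_apply id_apply)
    then show "trow ((g \<circ> x) m) = trow m" using gp[OF xm] unfolding \<rho>_def by simp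
  qed
  have "x = inv g \<circ> (g \<circ> x)"
    using Sk_inv_l[of g k] gperm by (simp add: o_assoc Sk_iff)
  then show ?thesis using pgrp_inv[OF gQ] pP by (intro bexI)
qed

lemma vanish:
  fixes f :: "(nat \<Rightarrow> nat) \<Rightarrow> rat"
  assumes fl: "\<And>q y. q \<in> QG \<Longrightarrow> y \<in> Sk k \<Longrightarrow> f (q \<circ> y) = of_int (sign q) * f y"
    and fr: "\<And>p y. p \<in> PG \<Longrightarrow> y \<in> Sk k \<Longrightarrow> f (y \<circ> p) = f y"
    and x: "x \<in> Sk k" and nx: "\<not> (\<exists>q\<in>QG. \<exists>p\<in>PG. x = q \<circ> p)"
  shows "f x = 0"
proof -
  have "\<exists>i j. i \<in> {1..k} \<and> j \<in> {1..k} \<and> i \<noteq> j \<and> tcol i = tcol j \<and> trow (inv x i) = trow (inv x j)"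
  proof (rule ccontr)
    assume a: "\<not> ?thesis"
    have "\<exists>q\<in>QG. \<exists>p\<in>PG. x = q \<circ> p"
    proof (rule comb[OF x])
      fix i j assume "i \<in> {1..k}" "j \<in> {1..k}" "i \<noteq> j" "tcol i = tcol j"
      then show "trow (inv x i) \<noteq> trow (inv x j)" using a by blast
    qed
    then show False using nx by simp
  qed
  then obtain i j where ij: "i \<in> {1..k}" "j \<in> {1..k}" "i \<noteq> j" "tcol i = tcol j" "trow (inv x i) = trow (inv x j)"
    by auto
  define t where "t = Transposition.transpose i j"
  have tperm: "t permutes {1..k}" unfolding t_def using ij by (simp add: permutes_swap_id)
  have tQ: "t \<in> QG"
  proof (rule pgrpI[OF tperm])
    fix m assume "m \<in> {1..k}"
    show "tcol (t m) = tcol m" unfolding t_def using ij by (cases "m = i"; cases "m = j") auto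
  qed
  have xperm: "x permutes {1..k}" using x by (simp add: Sk_iff)
  have xinv: "inv x (x m) = m" for m using Sk_inv_l[OF x] by (metis comp_apply id_apply)
  have xinv2: "x (inv x m) = m" for m using Sk_inv_r[OF x] by (metis comp_apply id_apply)
  define p where "p = inv x \<circ> t \<circ> x"
  have pP: "p \<in> PG"
  proof (rule pgrpI)
    show "p permutes {1..k}" unfolding p_def
      by (rule permutes_compose[OF xperm permutes_compose[OF tperm permutes_inv[OF xperm]]])
    fix m assume m: "m \<in> {1..k}"
    show "trow (p m) = trow m"
    proof (cases "x m = i \<or> x m = j")
      case True
      then show ?thesis unfolding p_def t_def using ij(3,5) xinv[of m]
        by (auto simp: Transposition.transpose_def)
    next
      case False
      then show ?thesis unfolding p_def t_def by (simp add: xinv)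
    qed
  qed
  have tt: "t \<circ> t = id" unfolding t_def by (simp add: fun_eq_iff Transposition.transpose_def)
  have "(t \<circ> x) \<circ> p = t \<circ> (x \<circ> inv x) \<circ> t \<circ> x" unfolding p_def by (simp add: o_assoc)
  also have "\<dots> = x" using Sk_inv_r[OF x] tt by (simp add: o_assoc)
  finally have e: "(t \<circ> x) \<circ> p = x" .
  have tx: "t \<circ> x \<in> Sk k" by (rule Sk_comp[OF pgrp_Sk[OF tQ] x])
  have "f x = f ((t \<circ> x) \<circ> p)" using e by simp
  also have "\<dots> = f (t \<circ> x)" by (rule fr[OF pP tx])
  also have "\<dots> = of_int (sign t) * f x" by (rule fl[OF tQ x])
  also have "\<dots> = - f x" unfolding t_def using ij(3) by (simp add: sign_swap_id)
  finally show ?thesis by simp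
qed

lemma VN:
  fixes f :: "(nat \<Rightarrow> nat) \<Rightarrow> rat"
  assumes fo: "\<And>y. y \<notin> Sk k \<Longrightarrow> f y = 0"
    and fl: "\<And>q y. q \<in> QG \<Longrightarrow> y \<in> Sk k \<Longrightarrow> f (q \<circ> y) = of_int (sign q) * f y"
    and fr: "\<And>p y. p \<in> PG \<Longrightarrow> y \<in> Sk k \<Longrightarrow> f (y \<circ> p) = f y"
  shows "f x = f id * cc x"
proof (cases "x \<in> Sk k")
  case False
  then show ?thesis using fo cc_out by simp
next
  case x: True
  show ?thesis
  proof (cases "\<exists>q\<in>QG. \<exists>p\<in>PG. x = q \<circ> p")
    case True
    then obtain q p where q: "q \<in> QG" and p: "p \<in> PG" and e: "x = q \<circ> p" by blast
    have pS: "p \<in> Sk k" by (rule pgrp_Sk[OF p])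
    have "f x = of_int (sign q) * f p" unfolding e by (rule fl[OF q pS])
    also have "f p = f (id \<circ> p)" by simp
    also have "\<dots> = f id" by (rule fr[OF p Sk_id])
    finally have 1: "f x = of_int (sign q) * f id" .
    have "cc x = of_int (sign q) * cc p" unfolding e by (rule cc_left[OF q])
    also have "cc p = cc (id \<circ> p)" by simp
    also have "\<dots> = 1" using cc_right[OF p, of id] cc_id by simp
    finally have 2: "cc x = of_int (sign q)" by simp
    show ?thesis using 1 2 by simp
  next
    case False
    have "f x = 0" by (rule vanish[OF fl fr x False])
    moreover have "cc x = 0"
      by (rule vanish[OF cc_left cc_right x False])
    ultimately show ?thesis by simp
  qed
qed

definition "\<mu>0 = ga_mult k cc cc id"

lemma cc_sq: "ga_mult k cc cc = (\<lambda>x. \<mu>0 * cc x)"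
proof
  fix x
  show "ga_mult k cc cc x = \<mu>0 * cc x"
    unfolding \<mu>0_def
  proof (rule VN)
    show "ga_mult k cc cc y = 0" if "y \<notin> Sk k" for y using that by (rule ga_mult_out)
    show "ga_mult k cc cc (q \<circ> y) = of_int (sign q) * ga_mult k cc cc y" if q: "q \<in> QG" and y: "y \<in> Sk k" for q y
    proof -
      have "ga_mult k cc cc (q \<circ> y) = (\<Sum>a\<in>Sk k. cc (q \<circ> a) * cc (inv a \<circ> y))"
        by (rule ga_mult_left_shift[OF pgrp_Sk[OF q] y])
      also have "\<dots> = (\<Sum>a\<in>Sk k. of_int (sign q) * (cc a * cc (inv a \<circ> y)))"
        by (simp add: cc_left[OF q] mult.assoc)
      also have "\<dots> = of_int (sign q) * ga_mult k cc cc y"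
        by (simp add: ga_mult_eq[OF y] sum_distrib_left)
      finally show ?thesis .
    qed
    show "ga_mult k cc cc (y \<circ> p) = ga_mult k cc cc y" if p: "p \<in> PG" and y: "y \<in> Sk k" for p y
    proof -
      have "ga_mult k cc cc (y \<circ> p) = (\<Sum>a\<in>Sk k. cc a * cc (inv a \<circ> y \<circ> p))"
        by (simp add: ga_mult_eq[OF Sk_comp[OF y pgrp_Sk[OF p]]] o_assoc)
      also have "\<dots> = (\<Sum>a\<in>Sk k. cc a * cc (inv a \<circ> y))"
        by (simp add: cc_right[OF p])
      also have "\<dots> = ga_mult k cc cc y" by (simp add: ga_mult_eq[OF y])
      finally show ?thesis .
    qed
  qed
qed

definition "Ai = (\<lambda>x. if x \<in> PG then 1 else (0::rat))"
definition "ee = ga_mult k Ai cc"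

lemma cc_Ai: "ga_mult k cc Ai = (\<lambda>x. of_nat (card PG) * cc x)"
proof
  fix x show "ga_mult k cc Ai x = of_nat (card PG) * cc x"
  proof (cases "x \<in> Sk k")
    case False then show ?thesis by (simp add: ga_mult_out cc_out)
  next
    case x: True
    have "ga_mult k cc Ai x = (\<Sum>b\<in>Sk k. cc (x \<circ> inv b) * Ai b)" by (rule ga_mult_eq2[OF x])
    also have "\<dots> = (\<Sum>b\<in>Sk k. if b \<in> PG then cc x else 0)"
    proof (rule sum.cong[OF refl])
      fix b assume b: "b \<in> Sk k"
      show "cc (x \<circ> inv b) * Ai b = (if b \<in> PG then cc x else 0)"
        using cc_right[OF pgrp_inv, of b x] by (simp add: Ai_def)
    qed
    also have "\<dots> = (\<Sum>b\<in>PG. cc x)"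
    proof -
      have "PG \<subseteq> Sk k" by (rule subsetI, rule pgrp_Sk)
      then have "Sk k \<inter> PG = PG" by blast
      then show ?thesis by (simp add: sum.If_cases finite_Sk)
    qed
    also have "\<dots> = of_nat (card PG) * cc x" by simp
    finally show ?thesis .
  qed
qed

lemma ee_sq: "ga_mult k ee ee = (\<lambda>x. (of_nat (card PG) * \<mu>0) * ee x)"
proof -
  have "ga_mult k ee ee = ga_mult k Ai (ga_mult k (ga_mult k cc Ai) cc)"
    unfolding ee_def by (simp only: ga_assoc)
  also have "\<dots> = ga_mult k Ai (\<lambda>x. of_nat (card PG) * ga_mult k cc cc x)"
    by (simp only: cc_Ai ga_mult_scale_left)
  also have "\<dots> = ga_mult k Ai (\<lambda>x. (of_nat (card PG) * \<mu>0) * cc x)"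
    by (simp add: cc_sq mult.assoc)
  also have "\<dots> = (\<lambda>x. (of_nat (card PG) * \<mu>0) * ee x)"
    unfolding ee_def by (rule ga_mult_scale_right)
  finally show ?thesis .
qed

lemma ee_formula: assumes x: "x \<in> Sk k"
  shows "ee x = (\<Sum>a\<in>PG. \<Sum>\<tau>\<in>QG. \<Sum>\<sigma>\<in>PG. if a \<circ> \<tau> \<circ> \<sigma> = x then of_int (sign \<tau>) else 0)"
proof -
  have "ee x = (\<Sum>a\<in>Sk k. Ai a * cc (inv a \<circ> x))" unfolding ee_def by (rule ga_mult_eq[OF x])
  also have "\<dots> = (\<Sum>a\<in>Sk k. if a \<in> PG then cc (inv a \<circ> x) else 0)"
    by (rule sum.cong[OF refl]) (simp add: Ai_def)
  also have "\<dots> = (\<Sum>a\<in>PG. cc (inv a \<circ> x))"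
  proof -
    have "PG \<subseteq> Sk k" by (rule subsetI, rule pgrp_Sk)
    then have "Sk k \<inter> PG = PG" by blast
    then show ?thesis by (simp add: sum.If_cases finite_Sk)
  qed
  also have "\<dots> = (\<Sum>a\<in>PG. \<Sum>\<tau>\<in>QG. \<Sum>\<sigma>\<in>PG. if a \<circ> \<tau> \<circ> \<sigma> = x then of_int (sign \<tau>) else 0)"
  proof (rule sum.cong[OF refl])
    fix a assume a: "a \<in> PG"
    have aS: "a \<in> Sk k" by (rule pgrp_Sk[OF a])
    have eq: "(\<tau> \<circ> \<sigma> = inv a \<circ> x) = (a \<circ> \<tau> \<circ> \<sigma> = x)" for \<tau> \<sigma>
    proof -
      have "(\<tau> \<circ> \<sigma> = inv a \<circ> x) = (a \<circ> (\<tau> \<circ> \<sigma>) = a \<circ> (inv a \<circ> x))"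
        by (rule Sk_cancel_left[OF aS, symmetric])
      also have "a \<circ> (inv a \<circ> x) = x" by (simp add: o_assoc Sk_inv_r[OF aS])
      finally show ?thesis by (simp only: o_assoc)
    qed
    show "cc (inv a \<circ> x) = (\<Sum>\<tau>\<in>QG. \<Sum>\<sigma>\<in>PG. if a \<circ> \<tau> \<circ> \<sigma> = x then of_int (sign \<tau>) else 0)"
      unfolding cc_def2 by (simp only: eq)
  qed
  finally show ?thesis .
qed

lemma ee_sym: assumes x: "x \<in> Sk k" shows "ee (inv x) = ee x"
proof -
  have ix: "inv x \<in> Sk k" by (rule Sk_inv[OF x])
  have "ee (inv x) = (\<Sum>a\<in>PG. \<Sum>\<tau>\<in>QG. \<Sum>\<sigma>\<in>PG. if a \<circ> \<tau> \<circ> \<sigma> = inv x then of_int (sign \<tau>) else 0)"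
    by (rule ee_formula[OF ix])
  also have "\<dots> = (\<Sum>a\<in>PG. \<Sum>\<tau>\<in>QG. \<Sum>\<sigma>\<in>PG. if a \<circ> \<tau> \<circ> inv \<sigma> = inv x then of_int (sign \<tau>) else 0)"
    by (rule sum.cong[OF refl], rule sum.cong[OF refl], rule sum_inv_reindex)
  also have "\<dots> = (\<Sum>a\<in>PG. \<Sum>\<tau>\<in>QG. \<Sum>\<sigma>\<in>PG. if a \<circ> inv \<tau> \<circ> inv \<sigma> = inv x then of_int (sign (inv \<tau>)) else 0)"
    by (rule sum.cong[OF refl], rule sum_inv_reindex)
  also have "\<dots> = (\<Sum>a\<in>PG. \<Sum>\<tau>\<in>QG. \<Sum>\<sigma>\<in>PG. if inv a \<circ> inv \<tau> \<circ> inv \<sigma> = inv x then of_int (sign (inv \<tau>)) else 0)"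
    by (rule sum_inv_reindex)
  also have "\<dots> = (\<Sum>a\<in>PG. \<Sum>\<tau>\<in>QG. \<Sum>\<sigma>\<in>PG. if \<sigma> \<circ> \<tau> \<circ> a = x then of_int (sign \<tau>) else 0)"
  proof (intro sum.cong refl)
    fix a \<tau> \<sigma> assume a: "a \<in> PG" and t: "\<tau> \<in> QG" and s: "\<sigma> \<in> PG"
    have aS: "a \<in> Sk k" and tS: "\<tau> \<in> Sk k" and sS: "\<sigma> \<in> Sk k" using a t s by (simp_all add: pgrp_Sk)
    have "inv a \<circ> inv \<tau> \<circ> inv \<sigma> = inv (\<sigma> \<circ> \<tau> \<circ> a)"
      by (simp only: Sk_inv_comp[OF Sk_comp[OF sS tS] aS] Sk_inv_comp[OF sS tS] o_assoc)
    moreover have "(inv (\<sigma> \<circ> \<tau> \<circ> a) = inv x) = (\<sigma> \<circ> \<tau> \<circ> a = x)"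
    proof
      assume "inv (\<sigma> \<circ> \<tau> \<circ> a) = inv x"
      then have "inv (inv (\<sigma> \<circ> \<tau> \<circ> a)) = inv (inv x)" by (rule arg_cong)
      then show "\<sigma> \<circ> \<tau> \<circ> a = x"
        by (simp only: Sk_inv_inv[OF x] Sk_inv_inv[OF Sk_comp[OF Sk_comp[OF sS tS] aS]])
    qed simp
    moreover have "sign (inv \<tau>) = sign \<tau>" by (rule sign_inverse[OF pgrp_permutation[OF t]])
    ultimately show "(if inv a \<circ> inv \<tau> \<circ> inv \<sigma> = inv x then of_int (sign (inv \<tau>)) else 0) = (if \<sigma> \<circ> \<tau> \<circ> a = x then of_int (sign \<tau>) else (0::rat))"
      by simp
  qed
  also have "\<dots> = (\<Sum>a\<in>PG. \<Sum>\<sigma>\<in>PG. \<Sum>\<tau>\<in>QG. if \<sigma> \<circ> \<tau> \<circ> a = x then of_int (sign \<tau>) else 0)"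
    by (rule sum.cong[OF refl], rule sum.swap)
  also have "\<dots> = (\<Sum>\<sigma>\<in>PG. \<Sum>a\<in>PG. \<Sum>\<tau>\<in>QG. if \<sigma> \<circ> \<tau> \<circ> a = x then of_int (sign \<tau>) else 0)"
    by (rule sum.swap)
  also have "\<dots> = (\<Sum>\<sigma>\<in>PG. \<Sum>\<tau>\<in>QG. \<Sum>a\<in>PG. if \<sigma> \<circ> \<tau> \<circ> a = x then of_int (sign \<tau>) else 0)"
    by (rule sum.cong[OF refl], rule sum.swap)
  also have "\<dots> = ee x" by (rule ee_formula[OF x, symmetric])
  finally show ?thesis .
qed

lemma ee_id: "ee id = of_nat (card PG)"
proof -
  have "ee id = (\<Sum>a\<in>Sk k. Ai a * cc (inv a \<circ> id))" unfolding ee_def by (rule ga_mult_eq[OF Sk_id])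
  also have "\<dots> = (\<Sum>a\<in>Sk k. if a \<in> PG then 1 else 0)"
  proof (rule sum.cong[OF refl])
    fix a assume a: "a \<in> Sk k"
    show "Ai a * cc (inv a \<circ> id) = (if a \<in> PG then 1 else 0)"
    proof (cases "a \<in> PG")
      case True
      have "cc (inv a \<circ> id) = cc (id \<circ> inv a)" by simp
      also have "\<dots> = 1" using cc_right[OF pgrp_inv[OF True], of id] cc_id by simp
      finally show ?thesis using True by (simp add: Ai_def)
    qed (simp add: Ai_def)
  qed
  also have "\<dots> = of_nat (card PG)"
  proof -
    have "PG \<subseteq> Sk k" by (rule subsetI, rule pgrp_Sk)
    then have "Sk k \<inter> PG = PG" by blast
    then show ?thesis by (simp add: sum.If_cases finite_Sk)
  qed
  finally show ?thesis .
qed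

lemma mu0_pos: "\<mu>0 > 0"
proof -
  have cP: "card PG > 0" using pgrp_id[of k trow] finite_pgrp[of k trow] card_gt_0_iff by blast
  have "ga_mult k ee ee id = (\<Sum>a\<in>Sk k. ee a * ee (inv a \<circ> id))" by (rule ga_mult_eq[OF Sk_id])
  also have "\<dots> = (\<Sum>a\<in>Sk k. (ee a)^2)"
    by (rule sum.cong[OF refl]) (simp add: ee_sym power2_eq_square)
  finally have 1: "ga_mult k ee ee id = (\<Sum>a\<in>Sk k. (ee a)^2)" .
  have "(ee id)^2 \<le> (\<Sum>a\<in>Sk k. (ee a)^2)"
    by (rule member_le_sum[OF Sk_id]) (simp_all add: finite_Sk)
  moreover have "ga_mult k ee ee id = (of_nat (card PG) * \<mu>0) * ee id"
    by (subst ee_sq) (rule refl)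
  ultimately have "(of_nat (card PG))^2 \<le> (of_nat (card PG) * \<mu>0) * of_nat (card PG)"
    using 1 by (simp only: ee_id)
  then have "(of_nat (card PG) :: rat) * of_nat (card PG) \<le> (of_nat (card PG) * of_nat (card PG)) * \<mu>0"
    by (simp add: power2_eq_square mult_ac)
  moreover have "(0::rat) < of_nat (card PG) * of_nat (card PG)" using cP by simp
  ultimately have "1 \<le> \<mu>0" by (metis mult.right_neutral mult_le_cancel_left_pos)
  then show ?thesis by simp
qed

lemma young_mu_eq: "young_mu k num = \<mu>0"
  unfolding young_mu_def
proof (rule the_equality)
  show "\<mu>0 \<noteq> 0 \<and> ga_mult k cc cc = (\<lambda>x. \<mu>0 * cc x)" using mu0_pos cc_sq by simp
  fix m assume "m \<noteq> 0 \<and> ga_mult k cc cc = (\<lambda>x. m * cc x)"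
  then have "ga_mult k cc cc id = m * cc id" by simp
  then show "m = \<mu>0" using cc_id by (simp add: \<mu>0_def)
qed

lemma young_mu_nz: "young_mu k num \<noteq> 0"
  using young_mu_eq mu0_pos by simp

end




lemma ptensor_cong: "(\<And>i. i \<in> {1..k} \<Longrightarrow> y i = y' i) \<Longrightarrow> ptensor k y = ptensor k y'"
  unfolding ptensor_def by (intro ext prod.cong) auto

lemma perm_act_ptensor:
  fixes y :: "nat \<Rightarrow> complex ^ 'n"
  assumes s: "\<sigma> \<in> Sk k"
  shows "perm_act \<sigma> (ptensor k y) = ptensor k (y \<circ> \<sigma>)"
proof
  fix j :: "nat \<Rightarrow> 'n"
  have b: "bij_betw \<sigma> {1..k} {1..k}" using s unfolding Sk_iff by (rule permutes_imp_bij)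
  have "perm_act \<sigma> (ptensor k y) j = (\<Prod>i\<in>{1..k}. y i $ j (inv \<sigma> i))"
    by (simp add: perm_act_def ptensor_def)
  also have "\<dots> = (\<Prod>m\<in>{1..k}. y (\<sigma> m) $ j (inv \<sigma> (\<sigma> m)))"
    by (rule prod.reindex_bij_betw[OF b, symmetric])
  also have "\<dots> = (\<Prod>m\<in>{1..k}. y (\<sigma> m) $ j m)"
  proof (rule prod.cong[OF refl])
    fix m have "inv \<sigma> (\<sigma> m) = m" using Sk_inv_l[OF s] by (metis comp_apply id_apply)
    then show "y (\<sigma> m) $ j (inv \<sigma> (\<sigma> m)) = y (\<sigma> m) $ j m" by simp
  qed
  also have "\<dots> = ptensor k (y \<circ> \<sigma>) j" by (simp add: ptensor_def)
  finally show "perm_act \<sigma> (ptensor k y) j = ptensor k (y \<circ> \<sigma>) j" .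
qed

context tab
begin

definition W :: "(nat \<Rightarrow> complex ^ 'n) \<Rightarrow> 'n tensor" where
  "W x = (\<lambda>j. \<Sum>\<tau>\<in>QG. of_int (sign \<tau>) * ptensor k (\<lambda>i. x (trow (\<tau> i))) j)"

lemma row_sum:
  "(\<lambda>j'. \<Sum>\<sigma>\<in>PG. perm_act \<sigma> (ptensor k (\<lambda>i. x (trow i))) j') = (\<lambda>j'. of_nat (card PG) * ptensor k (\<lambda>i. x (trow i)) j')"
proof
  fix j'
  have "(\<Sum>\<sigma>\<in>PG. perm_act \<sigma> (ptensor k (\<lambda>i. x (trow i))) j') = (\<Sum>\<sigma>\<in>PG. ptensor k (\<lambda>i. x (trow i)) j')"
  proof (rule sum.cong[OF refl])
    fix \<sigma> assume s: "\<sigma> \<in> PG"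
    have "perm_act \<sigma> (ptensor k (\<lambda>i. x (trow i))) = ptensor k ((\<lambda>i. x (trow i)) \<circ> \<sigma>)"
      by (rule perm_act_ptensor[OF pgrp_Sk[OF s]])
    also have "\<dots> = ptensor k (\<lambda>i. x (trow i))"
      by (rule ptensor_cong) (simp add: pgrpD[OF s])
    finally show "perm_act \<sigma> (ptensor k (\<lambda>i. x (trow i))) j' = ptensor k (\<lambda>i. x (trow i)) j'" by simp
  qed
  then show "(\<Sum>\<sigma>\<in>PG. perm_act \<sigma> (ptensor k (\<lambda>i. x (trow i))) j') = of_nat (card PG) * ptensor k (\<lambda>i. x (trow i)) j'"
    by simp
qed

lemma young_sym_W:
  "young_sym k num (ptensor k (\<lambda>i. x (trow i))) = (\<lambda>j. of_nat (card PG) * W x j)"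
proof
  fix j
  have "young_sym k num (ptensor k (\<lambda>i. x (trow i))) j =
     (\<Sum>\<tau>\<in>QG. of_int (sign \<tau>) * perm_act \<tau> (\<lambda>j'. of_nat (card PG) * ptensor k (\<lambda>i. x (trow i)) j') j)"
    unfolding young_sym_def row_group_pgrp col_group_pgrp row_sum by (rule refl)
  also have "\<dots> = (\<Sum>\<tau>\<in>QG. of_nat (card PG) * (of_int (sign \<tau>) * ptensor k (\<lambda>i. x (trow (\<tau> i))) j))"
  proof (rule sum.cong[OF refl])
    fix \<tau> assume t: "\<tau> \<in> QG"
    have "perm_act \<tau> (\<lambda>j'. of_nat (card PG) * ptensor k (\<lambda>i. x (trow i)) j') j
        = of_nat (card PG) * perm_act \<tau> (ptensor k (\<lambda>i. x (trow i))) j"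
      by (simp add: perm_act_def)
    also have "perm_act \<tau> (ptensor k (\<lambda>i. x (trow i))) = ptensor k (\<lambda>i. x (trow (\<tau> i)))"
      using perm_act_ptensor[OF pgrp_Sk[OF t], of "\<lambda>i. x (trow i)"] by (simp add: comp_def)
    finally show "of_int (sign \<tau>) * perm_act \<tau> (\<lambda>j'. of_nat (card PG) * ptensor k (\<lambda>i. x (trow i)) j') j
        = of_nat (card PG) * (of_int (sign \<tau>) * ptensor k (\<lambda>i. x (trow (\<tau> i))) j)"
      by (simp add: mult_ac)
  qed
  also have "\<dots> = of_nat (card PG) * W x j"
    by (simp add: W_def sum_distrib_left)
  finally show "young_sym k num (ptensor k (\<lambda>i. x (trow i))) j = of_nat (card PG) * W x j" .
qed

lemma young_proj_W:
  "young_proj k num (ptensor k (\<lambda>i. x (trow i))) = (\<lambda>j. of_nat (card PG) * W x j / of_rat (young_mu k num))"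
  unfolding young_proj_def young_sym_W by (rule refl)

lemma card_PG_pos: "card PG > 0"
  using pgrp_id[of k trow] finite_pgrp[of k trow] card_gt_0_iff by blast

lemma young_proj_zero_iff:
  "young_proj k num (ptensor k (\<lambda>i. x (trow i))) = (\<lambda>_. 0) \<longleftrightarrow> W x = (\<lambda>_. 0)"
proof -
  have c: "(of_nat (card PG) :: complex) \<noteq> 0" using card_PG_pos by simp
  have m: "(of_rat (young_mu k num) :: complex) \<noteq> 0" using young_mu_nz by simp
  show ?thesis unfolding young_proj_W fun_eq_iff using c m by simp
qed

lemma W_scale:
  assumes c: "\<And>i. i \<in> {1..r} \<Longrightarrow> y i = c i *s x i"
  shows "W y = (\<lambda>j. (\<Prod>i\<in>{1..k}. c (trow i)) * W x j)"
proof
  fix j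
  have "W y j = (\<Sum>\<tau>\<in>QG. of_int (sign \<tau>) * ((\<Prod>i\<in>{1..k}. c (trow i)) * ptensor k (\<lambda>i. x (trow (\<tau> i))) j))"
    unfolding W_def
  proof (rule sum.cong[OF refl])
    fix \<tau> assume t: "\<tau> \<in> QG"
    have b: "bij_betw \<tau> {1..k} {1..k}" using pgrp_permutes[OF t] by (rule permutes_imp_bij)
    have "ptensor k (\<lambda>i. y (trow (\<tau> i))) j = (\<Prod>i\<in>{1..k}. c (trow (\<tau> i)) * x (trow (\<tau> i)) $ j i)"
      unfolding ptensor_def
    proof (rule prod.cong[OF refl])
      fix i assume i: "i \<in> {1..k}"
      have "trow (\<tau> i) \<in> {1..r}" by (rule row_range[OF pgrp_in[OF t i]])
      then show "y (trow (\<tau> i)) $ j i = c (trow (\<tau> i)) * x (trow (\<tau> i)) $ j i" using c by simp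
    qed
    also have "\<dots> = (\<Prod>i\<in>{1..k}. c (trow (\<tau> i))) * ptensor k (\<lambda>i. x (trow (\<tau> i))) j"
      by (simp add: prod.distrib ptensor_def)
    also have "(\<Prod>i\<in>{1..k}. c (trow (\<tau> i))) = (\<Prod>i\<in>{1..k}. c (trow i))"
      by (rule prod.reindex_bij_betw[OF b])
    finally show "of_int (sign \<tau>) * ptensor k (\<lambda>i. y (trow (\<tau> i))) j = of_int (sign \<tau>) * ((\<Prod>i\<in>{1..k}. c (trow i)) * ptensor k (\<lambda>i. x (trow (\<tau> i))) j)"
      by simp
  qed
  also have "\<dots> = (\<Prod>i\<in>{1..k}. c (trow i)) * W x j"
    by (simp add: W_def sum_distrib_left mult_ac)
  finally show "W y j = (\<Prod>i\<in>{1..k}. c (trow i)) * W x j" .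
qed

lemma dual_exists:
  fixes x :: "nat \<Rightarrow> complex ^ 'n"
  assumes inj: "inj_on x {1..r}" and ind: "vec.independent (x ` {1..r})"
  shows "\<exists>\<phi>. \<forall>s\<in>{1..r}. \<forall>t\<in>{1..r}. (\<Sum>n\<in>UNIV. \<phi> s $ n * x t $ n) = (if s = t then 1 else 0)"
proof -
  define BB where "BB = vec.extend_basis (x ` {1..r})"
  have sub: "x ` {1..r} \<subseteq> BB" unfolding BB_def by (rule vec.extend_basis_superset[OF ind])
  have indB: "vec.independent BB" unfolding BB_def by (rule vec.independent_extend_basis[OF ind])
  have spB: "vec.span BB = UNIV" unfolding BB_def by (rule vec.span_extend_basis[OF ind])
  define \<phi> where "\<phi> s = (\<chi> n. vec.representation BB (axis n 1) (x s))" for s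
  have "(\<Sum>n\<in>UNIV. \<phi> s $ n * x t $ n) = (if s = t then 1 else 0)" if s: "s \<in> {1..r}" and t: "t \<in> {1..r}" for s t
  proof -
    have "(\<Sum>n\<in>UNIV. \<phi> s $ n * x t $ n) = (\<Sum>n\<in>UNIV. vec.representation BB (x t $ n *s axis n 1) (x s))"
    proof (rule sum.cong[OF refl])
      fix n
      show "\<phi> s $ n * x t $ n = vec.representation BB (x t $ n *s axis n 1) (x s)"
        unfolding \<phi>_def using vec.representation_scale[OF indB, of "axis n 1" "x t $ n"] spB by simp
    qed
    also have "\<dots> = vec.representation BB (\<Sum>n\<in>UNIV. x t $ n *s axis n 1) (x s)"
      using vec.representation_sum[OF indB, of UNIV "\<lambda>n. x t $ n *s axis n 1"] spB by simp
    also have "(\<Sum>n\<in>UNIV. x t $ n *s axis n 1) = x t" by (rule basis_expansion)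
    also have "vec.representation BB (x t) (x s) = (if x s = x t then 1 else 0)"
    proof -
      have "x t \<in> BB" using sub t by blast
      then show ?thesis using vec.representation_basis[OF indB, of "x t"] by simp
    qed
    also have "(x s = x t) = (s = t)" using inj s t by (auto dest: inj_onD)
    finally show ?thesis .
  qed
  then show ?thesis by blast
qed

lemma W_nonzero:
  fixes x :: "nat \<Rightarrow> complex ^ 'n"
  assumes \<phi>: "\<And>s t. s \<in> {1..r} \<Longrightarrow> t \<in> {1..r} \<Longrightarrow> (\<Sum>n\<in>UNIV. \<phi> s $ n * x t $ n) = (if s = t then 1 else 0)"
  shows "W x \<noteq> (\<lambda>_. 0)"
proof
  assume W0: "W x = (\<lambda>_. 0)"
  define J where "J = PiE {1..k} (\<lambda>_. UNIV :: 'n set)"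
  define Phi where "Phi j = (\<Prod>i\<in>{1..k}. \<phi> (trow i) $ j i)" for j :: "nat \<Rightarrow> 'n"
  have "(\<Sum>j\<in>J. W x j * Phi j) = 0" using W0 by simp
  moreover have "(\<Sum>j\<in>J. W x j * Phi j) = 1"
  proof -
    have "(\<Sum>j\<in>J. W x j * Phi j) = (\<Sum>j\<in>J. \<Sum>\<tau>\<in>QG. of_int (sign \<tau>) * (ptensor k (\<lambda>i. x (trow (\<tau> i))) j * Phi j))"
      unfolding W_def by (simp add: sum_distrib_right mult.assoc)
    also have "\<dots> = (\<Sum>\<tau>\<in>QG. of_int (sign \<tau>) * (\<Sum>j\<in>J. ptensor k (\<lambda>i. x (trow (\<tau> i))) j * Phi j))"
      by (simp add: sum.swap[of _ J] sum_distrib_left)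
    also have "\<dots> = (\<Sum>\<tau>\<in>QG. if \<tau> = id then 1 else 0)"
    proof (rule sum.cong[OF refl])
      fix \<tau> assume t: "\<tau> \<in> QG"
      have "(\<Sum>j\<in>J. ptensor k (\<lambda>i. x (trow (\<tau> i))) j * Phi j)
          = (\<Sum>j\<in>J. \<Prod>i\<in>{1..k}. x (trow (\<tau> i)) $ j i * \<phi> (trow i) $ j i)"
        unfolding ptensor_def Phi_def by (simp add: prod.distrib)
      also have "\<dots> = (\<Prod>i\<in>{1..k}. \<Sum>n\<in>UNIV. x (trow (\<tau> i)) $ n * \<phi> (trow i) $ n)"
        unfolding J_def by (rule prod_sum_PiE[symmetric]) simp_all
      also have "\<dots> = (\<Prod>i\<in>{1..k}. if trow i = trow (\<tau> i) then 1 else 0)"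
      proof (rule prod.cong[OF refl])
        fix i assume i: "i \<in> {1..k}"
        have "(\<Sum>n\<in>UNIV. x (trow (\<tau> i)) $ n * \<phi> (trow i) $ n) = (\<Sum>n\<in>UNIV. \<phi> (trow i) $ n * x (trow (\<tau> i)) $ n)"
          by (simp add: mult.commute)
        also have "\<dots> = (if trow i = trow (\<tau> i) then 1 else 0)"
          by (rule \<phi>[OF row_range[OF i] row_range[OF pgrp_in[OF t i]]])
        finally show "(\<Sum>n\<in>UNIV. x (trow (\<tau> i)) $ n * \<phi> (trow i) $ n) = (if trow i = trow (\<tau> i) then 1 else 0)" .
      qed
      also have "\<dots> = (if \<tau> = id then 1 else 0)"
      proof (cases "\<tau> = id")
        case True then show ?thesis by simp
      next
        case False
        have "\<tau> \<notin> PG" using PQ t False by blast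
        then obtain i where i: "i \<in> {1..k}" "trow (\<tau> i) \<noteq> trow i"
          using pgrp_permutes[OF t] unfolding pgrp_def by blast
        have "(\<Prod>i\<in>{1..k}. if trow i = trow (\<tau> i) then 1 else (0::complex)) = 0"
        proof (rule prod_zero)
          show "\<exists>a\<in>{1..k}. (if trow a = trow (\<tau> a) then 1 else (0::complex)) = 0"
            using i by (intro bexI[of _ i]) auto
        qed simp
        then show ?thesis using False by simp
      qed
      finally show "of_int (sign \<tau>) * (\<Sum>j\<in>J. ptensor k (\<lambda>i. x (trow (\<tau> i))) j * Phi j) = (if \<tau> = id then 1 else 0)"
        by simp
    qed
    also have "\<dots> = 1" using pgrp_id[of k tcol] by (simp add: finite_pgrp)
    finally show ?thesis .
  qed
  ultimately show False by simp
qed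

definition G :: "(nat \<Rightarrow> complex ^ 'n) \<Rightarrow> (nat \<Rightarrow> complex ^ 'n) \<Rightarrow> 'n tensor" where
  "G w z = (\<lambda>j. \<Sum>\<tau>\<in>QG. of_int (sign \<tau>) * (\<Prod>i\<in>{1..k}. (if tcol i = 1 then w else z) (trow (\<tau> i)) $ j i))"

lemma W_G: "W x = G x x"
  unfolding W_def G_def ptensor_def by simp

lemma first_col: "s \<in> {1..r} \<Longrightarrow> \<exists>b. b \<in> {1..k} \<and> trow b = s \<and> tcol b = 1"
  using box_surj2[of s 1] lam_pos[of s] by auto

lemma G_alt:
  assumes s: "s \<in> {1..r}" and t: "t \<in> {1..r}" and st: "s \<noteq> t" and w: "w s = w t"
  shows "G w z j = 0"
proof -
  obtain bs where bs: "bs \<in> {1..k}" "trow bs = s" "tcol bs = 1" using first_col[OF s] by blast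
  obtain bt where bt: "bt \<in> {1..k}" "trow bt = t" "tcol bt = 1" using first_col[OF t] by blast
  have neq: "bs \<noteq> bt" using bs bt st by auto
  define tr where "tr = Transposition.transpose bs bt"
  have trperm: "tr permutes {1..k}" unfolding tr_def using bs bt by (simp add: permutes_swap_id)
  have trQ: "tr \<in> QG"
  proof (rule pgrpI[OF trperm])
    fix m assume "m \<in> {1..k}"
    show "tcol (tr m) = tcol m" unfolding tr_def using bs bt
      by (cases "m = bs"; cases "m = bt") (auto simp: Transposition.transpose_def)
  qed
  define F where "F \<tau> = of_int (sign \<tau>) * (\<Prod>i\<in>{1..k}. (if tcol i = 1 then w else z) (trow (\<tau> i)) $ j i)" for \<tau>
  have "G w z j = (\<Sum>\<tau>\<in>QG. F \<tau>)" unfolding G_def F_def by simp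
  also have "\<dots> = (\<Sum>\<tau>\<in>QG. F (tr \<circ> \<tau>))"
    by (rule sum.reindex_bij_betw[OF pgrp_bij[OF trQ], symmetric])
  also have "\<dots> = (\<Sum>\<tau>\<in>QG. - F \<tau>)"
  proof (rule sum.cong[OF refl])
    fix \<tau> assume ta: "\<tau> \<in> QG"
    have sg: "sign (tr \<circ> \<tau>) = - sign \<tau>"
      using sign_compose[OF pgrp_permutation[OF trQ] pgrp_permutation[OF ta]] neq
      by (simp add: tr_def sign_swap_id)
    have pr: "(\<Prod>i\<in>{1..k}. (if tcol i = 1 then w else z) (trow ((tr \<circ> \<tau>) i)) $ j i)
        = (\<Prod>i\<in>{1..k}. (if tcol i = 1 then w else z) (trow (\<tau> i)) $ j i)"
    proof (rule prod.cong[OF refl])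
      fix i assume i: "i \<in> {1..k}"
      have ci: "tcol (\<tau> i) = tcol i" by (rule pgrpD[OF ta i])
      show "(if tcol i = 1 then w else z) (trow ((tr \<circ> \<tau>) i)) $ j i = (if tcol i = 1 then w else z) (trow (\<tau> i)) $ j i"
      proof (cases "\<tau> i = bs \<or> \<tau> i = bt")
        case True
        then have "tcol i = 1" using ci bs bt by auto
        then show ?thesis using True w bs bt by (auto simp: tr_def Transposition.transpose_def)
      next
        case False
        then show ?thesis by (simp add: tr_def Transposition.transpose_def)
      qed
    qed
    show "F (tr \<circ> \<tau>) = - F \<tau>" unfolding F_def using sg pr by simp
  qed
  also have "\<dots> = - (\<Sum>\<tau>\<in>QG. F \<tau>)" by (simp add: sum_negf)
  finally have "(\<Sum>\<tau>\<in>QG. F \<tau>) = - (\<Sum>\<tau>\<in>QG. F \<tau>)" using \<open>G w z j = (\<Sum>\<tau>\<in>QG. F \<tau>)\<close> by simp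
  then have "(\<Sum>\<tau>\<in>QG. F \<tau>) = 0" by simp
  then show ?thesis unfolding G_def F_def by simp
qed

lemma G_split:
  assumes s: "s \<in> {1..r}" and bs: "bs \<in> {1..k}" "trow bs = s" "tcol bs = 1" and ta: "\<tau> \<in> QG"
  shows "(\<Prod>i\<in>{1..k}. (if tcol i = 1 then w(s := V) else z) (trow (\<tau> i)) $ j i)
     = V $ j (inv \<tau> bs) * (\<Prod>i\<in>{1..k} - {inv \<tau> bs}. (if tcol i = 1 then w else z) (trow (\<tau> i)) $ j i)"
proof -
  define i0 where "i0 = inv \<tau> bs"
  have tS: "\<tau> \<in> Sk k" by (rule pgrp_Sk[OF ta])
  have i0: "i0 \<in> {1..k}" unfolding i0_def using pgrp_in[OF pgrp_inv[OF ta] bs(1)] .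
  have ti0: "\<tau> i0 = bs" unfolding i0_def using Sk_inv_r[OF tS] by (metis comp_apply id_apply)
  have ci0: "tcol i0 = 1" using pgrpD[OF ta i0] ti0 bs by simp
  have "(\<Prod>i\<in>{1..k}. (if tcol i = 1 then w(s := V) else z) (trow (\<tau> i)) $ j i)
     = (if tcol i0 = 1 then w(s := V) else z) (trow (\<tau> i0)) $ j i0 *
       (\<Prod>i\<in>{1..k} - {i0}. (if tcol i = 1 then w(s := V) else z) (trow (\<tau> i)) $ j i)"
    by (rule prod.remove[OF _ i0]) simp
  also have "(if tcol i0 = 1 then w(s := V) else z) (trow (\<tau> i0)) $ j i0 = V $ j i0"
    using ci0 ti0 bs by simp
  also have "(\<Prod>i\<in>{1..k} - {i0}. (if tcol i = 1 then w(s := V) else z) (trow (\<tau> i)) $ j i)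
      = (\<Prod>i\<in>{1..k} - {i0}. (if tcol i = 1 then w else z) (trow (\<tau> i)) $ j i)"
  proof (rule prod.cong[OF refl])
    fix i assume i: "i \<in> {1..k} - {i0}"
    show "(if tcol i = 1 then w(s := V) else z) (trow (\<tau> i)) $ j i = (if tcol i = 1 then w else z) (trow (\<tau> i)) $ j i"
    proof (cases "tcol i = 1")
      case True
      have "trow (\<tau> i) \<noteq> s"
      proof
        assume e: "trow (\<tau> i) = s"
        have ik: "i \<in> {1..k}" using i by simp
        have "tcol (\<tau> i) = 1" using pgrpD[OF ta ik] True by simp
        then have "\<tau> i = bs" using num_inj[OF pgrp_in[OF ta ik] bs(1)] e bs by simp
        then have "inv \<tau> (\<tau> i) = i0" unfolding i0_def by simp
        moreover have "inv \<tau> (\<tau> i) = i" using Sk_inv_l[OF tS] by (metis comp_apply id_apply)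
        ultimately show False using i by simp
      qed
      then show ?thesis using True by simp
    qed simp
  qed
  finally show ?thesis unfolding i0_def .
qed

lemma G_lin:
  assumes s: "s \<in> {1..r}" and U: "finite U"
  shows "G (w(s := (\<Sum>u\<in>U. c u *s v u))) z j = (\<Sum>u\<in>U. c u * G (w(s := v u)) z j)"
proof -
  obtain bs where bs: "bs \<in> {1..k}" "trow bs = s" "tcol bs = 1" using first_col[OF s] by blast
  define R where "R \<tau> = (\<Prod>i\<in>{1..k} - {inv \<tau> bs}. (if tcol i = 1 then w else z) (trow (\<tau> i)) $ j i)" for \<tau>
  have "G (w(s := (\<Sum>u\<in>U. c u *s v u))) z j = (\<Sum>\<tau>\<in>QG. of_int (sign \<tau>) * ((\<Sum>u\<in>U. c u *s v u) $ j (inv \<tau> bs) * R \<tau>))"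
    unfolding G_def R_def by (intro sum.cong refl arg_cong2[where f="(*)"] G_split[OF s bs])
  also have "\<dots> = (\<Sum>\<tau>\<in>QG. \<Sum>u\<in>U. c u * (of_int (sign \<tau>) * (v u $ j (inv \<tau> bs) * R \<tau>)))"
    by (simp add: sum_distrib_left sum_distrib_right mult_ac)
  also have "\<dots> = (\<Sum>u\<in>U. c u * (\<Sum>\<tau>\<in>QG. of_int (sign \<tau>) * (v u $ j (inv \<tau> bs) * R \<tau>)))"
    by (simp add: sum.swap[of _ QG] sum_distrib_left)
  also have "\<dots> = (\<Sum>u\<in>U. c u * G (w(s := v u)) z j)"
    unfolding G_def R_def by (intro sum.cong refl arg_cong2[where f="(*)"] G_split[OF s bs, symmetric])
  finally show ?thesis .
qed

lemma W_zero_dep: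
  fixes x :: "nat \<Rightarrow> complex ^ 'n"
  assumes nd: "\<not> (inj_on x {1..r} \<and> vec.independent (x ` {1..r}))"
  shows "W x = (\<lambda>_. 0)"
proof
  fix j
  show "W x j = 0"
  proof (cases "inj_on x {1..r}")
    case False
    then obtain s t where st: "s \<in> {1..r}" "t \<in> {1..r}" "s \<noteq> t" "x s = x t"
      unfolding inj_on_def by blast
    show ?thesis unfolding W_G by (rule G_alt[OF st])
  next
    case inj: True
    then have "vec.dependent (x ` {1..r})" using nd by simp
    then have "\<exists>a\<in>x ` {1..r}. a \<in> vec.span (x ` {1..r} - {a})"
      by (simp only: vec.dependent_def)
    then obtain a where a: "a \<in> x ` {1..r}" "a \<in> vec.span (x ` {1..r} - {a})"
      by (rule bexE)
    from a(1) obtain s where s: "s \<in> {1..r}" "a = x s" by (auto elim!: imageE)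
    have ee: "x ` {1..r} - {a} = x ` ({1..r} - {s})"
      unfolding s(2) using inj_on_image_set_diff[OF inj, of "{1..r}" "{s}"] s(1) by simp
    have fin: "finite (x ` ({1..r} - {s}))" by simp
    have "x s \<in> vec.span (x ` ({1..r} - {s}))" using a(2) ee s(2) by simp
    then have "x s \<in> range (\<lambda>u. \<Sum>v\<in>x ` ({1..r} - {s}). u v *s v)"
      by (simp only: vec.span_finite[OF fin])
    then obtain u where u: "x s = (\<Sum>v\<in>x ` ({1..r} - {s}). u v *s v)"
      by (rule rangeE)
    have injs: "inj_on x ({1..r} - {s})" using inj by (rule inj_on_subset) auto
    have u2: "x s = (\<Sum>t\<in>{1..r} - {s}. u (x t) *s x t)"
      using u unfolding sum.reindex[OF injs] by (simp add: comp_def)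
    have "W x j = G (x(s := x s)) x j" unfolding W_G by simp
    also have "\<dots> = G (x(s := (\<Sum>t\<in>{1..r} - {s}. u (x t) *s x t))) x j" using u2 by simp
    also have "\<dots> = (\<Sum>t\<in>{1..r} - {s}. u (x t) * G (x(s := x t)) x j)"
      by (rule G_lin[OF s(1)]) simp
    also have "\<dots> = 0"
    proof (rule sum.neutral, rule ballI)
      fix t assume t: "t \<in> {1..r} - {s}"
      have "G (x(s := x t)) x j = 0"
        by (rule G_alt[of s t]) (use s t in auto)
      then show "u (x t) * G (x(s := x t)) x j = 0" by simp
    qed
    finally show ?thesis .
  qed
qed

end



theorem mainTheorem3:
  fixes k r :: nat and lam :: "nat \<Rightarrow> nat" and num :: "nat \<Rightarrow> nat \<times> nat"
    and x :: "nat \<Rightarrow> complex ^ 'n"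
  assumes "young_tableau k r lam num"
  shows "(young_proj k num (ptensor k (\<lambda>i. x (tab_row num i))) \<noteq> (\<lambda>_. 0) \<longleftrightarrow>
            inj_on x {1..r} \<and> vec.independent (x ` {1..r}))
       \<and> (young_proj k num (ptensor k (\<lambda>i. x (tab_row num i))) \<noteq> (\<lambda>_. 0) \<longrightarrow>
            (\<forall>y :: nat \<Rightarrow> complex ^ 'n.
               (\<forall>i\<in>{1..r}. \<exists>c::complex. c \<noteq> 0 \<and> y i = c *s x i) \<longrightarrow>
               (\<exists>c::complex. c \<noteq> 0 \<and>
                  young_proj k num (ptensor k (\<lambda>i. y (tab_row num i))) =
                  (\<lambda>j. c * young_proj k num (ptensor k (\<lambda>i. x (tab_row num i))) j))))"
proof -
  interpret T: tab k r lam num using assms by (rule tab.intro)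
  have part1: "young_proj k num (ptensor k (\<lambda>i. x (tab_row num i))) \<noteq> (\<lambda>_. 0) \<longleftrightarrow>
            inj_on x {1..r} \<and> vec.independent (x ` {1..r})"
  proof
    assume "young_proj k num (ptensor k (\<lambda>i. x (tab_row num i))) \<noteq> (\<lambda>_. 0)"
    then have "T.W x \<noteq> (\<lambda>_. 0)" using T.young_proj_zero_iff[of x] by blast
    then show "inj_on x {1..r} \<and> vec.independent (x ` {1..r})" using T.W_zero_dep by blast
  next
    assume a: "inj_on x {1..r} \<and> vec.independent (x ` {1..r})"
    then obtain \<phi> where \<phi>: "\<forall>s\<in>{1..r}. \<forall>t\<in>{1..r}. (\<Sum>n\<in>UNIV. \<phi> s $ n * x t $ n) = (if s = t then 1 else 0)"
      using T.dual_exists by blast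
    have "T.W x \<noteq> (\<lambda>_. 0)" by (rule T.W_nonzero) (use \<phi> in blast)
    then show "young_proj k num (ptensor k (\<lambda>i. x (tab_row num i))) \<noteq> (\<lambda>_. 0)"
      using T.young_proj_zero_iff[of x] by blast
  qed
  have part2: "\<exists>c::complex. c \<noteq> 0 \<and>
                  young_proj k num (ptensor k (\<lambda>i. y (tab_row num i))) =
                  (\<lambda>j. c * young_proj k num (ptensor k (\<lambda>i. x (tab_row num i))) j)"
    if hy: "\<forall>i\<in>{1..r}. \<exists>c::complex. c \<noteq> 0 \<and> y i = c *s x i" for y :: "nat \<Rightarrow> complex ^ 'n"
  proof -
    obtain c where c: "\<forall>i\<in>{1..r}. c i \<noteq> 0 \<and> y i = c i *s x i"
      using bchoice[OF hy] by blast
    define \<kappa> where "\<kappa> = (\<Prod>i\<in>{1..k}. c (tab_row num i))"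
    have knz: "\<kappa> \<noteq> 0"
      unfolding \<kappa>_def using c T.row_range by (simp add: prod_zero_iff)
    have Wy: "T.W y = (\<lambda>j. \<kappa> * T.W x j)"
      unfolding \<kappa>_def by (rule T.W_scale) (use c in blast)
    show ?thesis
    proof (intro exI conjI)
      show "\<kappa> \<noteq> 0" by (rule knz)
      show "young_proj k num (ptensor k (\<lambda>i. y (tab_row num i))) =
                  (\<lambda>j. \<kappa> * young_proj k num (ptensor k (\<lambda>i. x (tab_row num i))) j)"
        unfolding T.young_proj_W Wy by (simp add: mult_ac)
    qed
  qed
  show ?thesis using part1 part2 by blast
qed

end
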